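(* Let $(\mathcal{A},[-,-],\alpha)$ be a multiplicative Hom-Malcev superalgebra. Then for every $n\geq0$ the derived Hom-superalgebra $\mathcal{A}^{n}=(\mathcal{A},[-,-]^{(n)}=\alpha^{2^{n}-1}\circ[-,-],\alpha^{2^{n}})$ is also a Hom-Malcev superalgebra.
   Context: $\mathcal{A}=\mathcal{A}_0\oplus\mathcal{A}_1$ is a $\mathbb{Z}_2$-graded vector space over an algebraically closed field $\mathbb{K}$ of characteristic $0$; $|x|$ is the parity of homogeneous $x$; even maps preserve parity. For an even bilinear bracket $[-,-]$ and even linear $\alpha$, $\widetilde{J}(x,y,z)=[[x,y],\alpha(z)]-[\alpha(x),[y,z]]-(-1)^{|y||z|}[[x,z],\alpha(y)]$. A Hom-Malcev superalgebra is a triple $(\mathcal{A},[-,-],\alpha)$ with $\alpha\circ[-,-]=[-,-]\circ(\alpha\otimes\alpha)$, $[x,y]=-(-1)^{|x||y|}[y,x]$, and for all homogeneous $x,y,z,t$: $2[\alpha^{2}(t),\widetilde{J}(x,y,z)]=\widetilde{J}(\alpha(t),\alpha(x),[y,z])+(-1)^{|x|(|y|+|z|)}\widetilde{J}(\alpha(t),\alpha(y),[z,x])+(-1)^{|z|(|x|+|y|)}\widetilde{J}(\alpha(t),\alpha(z),[x,y])$. *)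

theory Defs
  imports "HOL-Computational_Algebra.Polynomial"
begin

definition alg_closed_field :: "'k::field itself \<Rightarrow> bool" where
  "alg_closed_field _ \<longleftrightarrow> (\<forall>p :: 'k poly. 0 < degree p \<longrightarrow> (\<exists>x. poly p x = 0))"

definition graded_vs :: "('k::field \<Rightarrow> 'v::ab_group_add \<Rightarrow> 'v) \<Rightarrow> (nat \<Rightarrow> 'v set) \<Rightarrow> bool" where
  "graded_vs scale V \<longleftrightarrow> vector_space scale
     \<and> module.subspace scale (V 0) \<and> module.subspace scale (V 1)
     \<and> V 0 \<inter> V 1 = {0}
     \<and> (\<forall>v. \<exists>a\<in>V 0. \<exists>b\<in>V 1. v = a + b)"

definition hom_superalgebra ::
  "('k::field \<Rightarrow> 'v::ab_group_add \<Rightarrow> 'v) \<Rightarrow> (nat \<Rightarrow> 'v set) \<Rightarrow> ('v \<Rightarrow> 'v \<Rightarrow> 'v) \<Rightarrow> ('v \<Rightarrow> 'v) \<Rightarrow> bool" where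
  "hom_superalgebra scale V br al \<longleftrightarrow> graded_vs scale V
     \<and> (\<forall>x. Vector_Spaces.linear scale scale (br x))
     \<and> (\<forall>y. Vector_Spaces.linear scale scale (\<lambda>x. br x y))
     \<and> Vector_Spaces.linear scale scale al
     \<and> (\<forall>i\<in>{0,1}. \<forall>j\<in>{0,1}. \<forall>x\<in>V i. \<forall>y\<in>V j. br x y \<in> V ((i + j) mod 2))
     \<and> (\<forall>i\<in>{0,1}. \<forall>x\<in>V i. al x \<in> V i)"

text \<open>The super Hom-Jacobian J~(x,y,z); b and c are the parities of y and z.\<close>
definition hom_jac ::
  "('k::field \<Rightarrow> 'v::ab_group_add \<Rightarrow> 'v) \<Rightarrow> ('v \<Rightarrow> 'v \<Rightarrow> 'v) \<Rightarrow> ('v \<Rightarrow> 'v)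
   \<Rightarrow> nat \<Rightarrow> nat \<Rightarrow> 'v \<Rightarrow> 'v \<Rightarrow> 'v \<Rightarrow> 'v" where
  "hom_jac scale br al b c x y z =
     br (br x y) (al z) - br (al x) (br y z) - scale ((-1) ^ (b * c)) (br (br x z) (al y))"

definition hom_malcev_superalgebra ::
  "('k::field \<Rightarrow> 'v::ab_group_add \<Rightarrow> 'v) \<Rightarrow> (nat \<Rightarrow> 'v set) \<Rightarrow> ('v \<Rightarrow> 'v \<Rightarrow> 'v) \<Rightarrow> ('v \<Rightarrow> 'v) \<Rightarrow> bool" where
  "hom_malcev_superalgebra scale V br al \<longleftrightarrow> hom_superalgebra scale V br al
     \<and> (\<forall>x y. al (br x y) = br (al x) (al y))
     \<and> (\<forall>i\<in>{0,1}. \<forall>j\<in>{0,1}. \<forall>x\<in>V i. \<forall>y\<in>V j. br x y = - scale ((-1) ^ (i * j)) (br y x))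
     \<and> (\<forall>a\<in>{0,1}. \<forall>b\<in>{0,1}. \<forall>c\<in>{0,1}. \<forall>d\<in>{0,1}.
          \<forall>x\<in>V a. \<forall>y\<in>V b. \<forall>z\<in>V c. \<forall>t\<in>V d.
          scale 2 (br (al (al t)) (hom_jac scale br al b c x y z)) =
            hom_jac scale br al a (b + c) (al t) (al x) (br y z)
          + scale ((-1) ^ (a * (b + c))) (hom_jac scale br al b (c + a) (al t) (al y) (br z x))
          + scale ((-1) ^ (c * (a + b))) (hom_jac scale br al c (a + b) (al t) (al z) (br x y)))"

definition multiplicative :: "('v \<Rightarrow> 'v \<Rightarrow> 'v) \<Rightarrow> ('v \<Rightarrow> 'v) \<Rightarrow> bool" where
  "multiplicative br al \<longleftrightarrow> (\<forall>x y. al (br x y) = br (al x) (al y))"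

end

theory Submission
  imports Defs
begin

lemma lin_pow:
  assumes "Vector_Spaces.linear scale scale (al::'v::ab_group_add \<Rightarrow> 'v)" "vector_space scale"
  shows "Vector_Spaces.linear scale scale (al ^^ m)"
proof (induction m)
  case 0 then show ?case using assms(2) by (simp add: Vector_Spaces.linear_iff)
next
  case (Suc m)
  then show ?case using assms(1) by (auto simp: Vector_Spaces.linear_iff)
qed

lemma lin_add: "Vector_Spaces.linear s s f \<Longrightarrow> f (x + y) = f x + f y"
  by (simp add: Vector_Spaces.linear_iff)
lemma lin_scale: "Vector_Spaces.linear s s f \<Longrightarrow> f (s c x) = s c (f x)"
  by (simp add: Vector_Spaces.linear_iff)
lemma lin_diff: assumes "Vector_Spaces.linear s s (f::'v::ab_group_add \<Rightarrow> 'v)"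
  shows "f (x - y) = f x - f y"
proof -
  have "f (x - y) + f y = f x" using lin_add[OF assms, of "x - y" y] by simp
  then show ?thesis by (simp add: eq_diff_eq)
qed
lemma lin_neg: assumes "Vector_Spaces.linear s s (f::'v::ab_group_add \<Rightarrow> 'v)"
  shows "f (- x) = - f x"
  using lin_diff[OF assms, of 0 x] lin_diff[OF assms, of 0 0] by simp

lemma mult_pow: assumes "\<forall>x y. al (br x y) = br (al x) (al y)"
  shows "(al ^^ m) (br x y) = br ((al ^^ m) x) ((al ^^ m) y)"
  by (induction m) (auto simp: assms)

lemma pow_pow: "(f ^^ a) ((f ^^ b) x) = (f ^^ (a + b)) x"
  by (simp add: funpow_add)
lemma pow_one: "f ((f ^^ b) x) = (f ^^ Suc b) x" by simp
lemma pow_one': "(f ^^ b) (f x) = (f ^^ Suc b) x" by (simp add: funpow_swap1)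

lemma pres_pow: assumes "\<forall>x\<in>S. al x \<in> S" "x \<in> S" shows "(al ^^ m) x \<in> S"
  by (induction m) (use assms in auto)

lemma jac_pow:
  assumes lin: "Vector_Spaces.linear scale scale al" "vector_space scale"
    and mul: "\<forall>x y. al (br x y) = br (al x) (al y)"
  shows "hom_jac scale (\<lambda>x y. (al ^^ m) (br x y)) (al ^^ Suc m) b c x y z
       = (al ^^ (m + m)) (hom_jac scale br al b c x y z)"
  unfolding hom_jac_def
  by (simp add: lin_diff[OF lin_pow[OF lin]] lin_scale[OF lin_pow[OF lin]] mult_pow[OF mul]
      pow_pow pow_one pow_one' del: funpow.simps)

lemma jac_comm:
  assumes lin: "Vector_Spaces.linear scale scale al" "vector_space scale"
    and mul: "\<forall>x y. al (br x y) = br (al x) (al y)"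
  shows "(al ^^ k) (hom_jac scale br al b c x y z)
     = hom_jac scale br al b c ((al ^^ k) x) ((al ^^ k) y) ((al ^^ k) z)"
  unfolding hom_jac_def
  by (simp add: lin_diff[OF lin_pow[OF lin]] lin_scale[OF lin_pow[OF lin]] mult_pow[OF mul]
      pow_pow pow_one pow_one' add.commute del: funpow.simps)

lemma derived:
  fixes scale :: "'k::field_char_0 \<Rightarrow> 'v::ab_group_add \<Rightarrow> 'v"
  assumes H: "hom_malcev_superalgebra scale V br al"
  shows "hom_malcev_superalgebra scale V (\<lambda>x y. (al ^^ m) (br x y)) (al ^^ Suc m)"
proof -
  have hs: "hom_superalgebra scale V br al" and mul: "\<forall>x y. al (br x y) = br (al x) (al y)"
   and anti: "\<forall>i\<in>{0,1}. \<forall>j\<in>{0,1}. \<forall>x\<in>V i. \<forall>y\<in>V j. br x y = - scale ((-1) ^ (i * j)) (br y x)"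
   and mal: "\<forall>a\<in>{0,1}. \<forall>b\<in>{0,1}. \<forall>c\<in>{0,1}. \<forall>d\<in>{0,1}.
          \<forall>x\<in>V a. \<forall>y\<in>V b. \<forall>z\<in>V c. \<forall>t\<in>V d.
          scale 2 (br (al (al t)) (hom_jac scale br al b c x y z)) =
            hom_jac scale br al a (b + c) (al t) (al x) (br y z)
          + scale ((-1) ^ (a * (b + c))) (hom_jac scale br al b (c + a) (al t) (al y) (br z x))
          + scale ((-1) ^ (c * (a + b))) (hom_jac scale br al c (a + b) (al t) (al z) (br x y))"
    using H unfolding hom_malcev_superalgebra_def by blast+
  have gv: "graded_vs scale V" and lx: "\<forall>x. Vector_Spaces.linear scale scale (br x)"
    and ly: "\<forall>y. Vector_Spaces.linear scale scale (\<lambda>x. br x y)"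
    and la: "Vector_Spaces.linear scale scale al"
    and gr: "\<forall>i\<in>{0,1}. \<forall>j\<in>{0,1}. \<forall>x\<in>V i. \<forall>y\<in>V j. br x y \<in> V ((i + j) mod 2)"
    and ga: "\<forall>i\<in>{0,1}. \<forall>x\<in>V i. al x \<in> V i"
    using hs unfolding hom_superalgebra_def by blast+
  have vs: "vector_space scale" using gv unfolding graded_vs_def by auto
  note lin = la vs
  note lp = lin_pow[OF lin]
  have hs': "hom_superalgebra scale V (\<lambda>x y. (al ^^ m) (br x y)) (al ^^ Suc m)"
    unfolding hom_superalgebra_def
  proof (intro conjI gv allI ballI)
    fix x show "Vector_Spaces.linear scale scale (\<lambda>y. (al ^^ m) (br x y))"
      using Vector_Spaces.linear_compose[OF lx[rule_format, of x] lp[of m]] by (simp add: o_def)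
  next
    fix y show "Vector_Spaces.linear scale scale (\<lambda>x. (al ^^ m) (br x y))"
      using Vector_Spaces.linear_compose[OF ly[rule_format, of y] lp[of m]] by (simp add: o_def)
  next
    show "Vector_Spaces.linear scale scale (al ^^ Suc m)" by (rule lp)
  next
    fix i j x y assume "i \<in> {0,1::nat}" "j \<in> {0,1::nat}" "x \<in> V i" "y \<in> V j"
    then have "br x y \<in> V ((i + j) mod 2)" using gr by blast
    moreover have "(i + j) mod 2 \<in> {0,1}" by auto
    moreover have "\<forall>x\<in>V ((i + j) mod 2). al x \<in> V ((i + j) mod 2)"
      by (rule bspec[OF ga \<open>(i + j) mod 2 \<in> {0,1}\<close>])
    ultimately show "(al ^^ m) (br x y) \<in> V ((i + j) mod 2)"
      by (intro pres_pow)
  next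
    fix i x assume "i \<in> {0,1::nat}" "x \<in> V i"
    moreover have "\<forall>x\<in>V i. al x \<in> V i" by (rule bspec[OF ga \<open>i \<in> {0,1}\<close>])
    ultimately show "(al ^^ Suc m) x \<in> V i" by (intro pres_pow)
  qed
  show ?thesis
    unfolding hom_malcev_superalgebra_def
  proof (intro conjI hs' allI ballI)
    fix x y show "(al ^^ Suc m) ((al ^^ m) (br x y)) = (al ^^ m) (br ((al ^^ Suc m) x) ((al ^^ Suc m) y))"
      by (simp add: mult_pow[OF mul] pow_pow add.commute del: funpow.simps)
  next
    fix i j x y assume "i \<in> {0,1::nat}" "j \<in> {0,1::nat}" "x \<in> V i" "y \<in> V j"
    then have "br x y = - scale ((-1) ^ (i * j)) (br y x)" using anti by blast
    then show "(al ^^ m) (br x y) = - scale ((-1) ^ (i * j)) ((al ^^ m) (br y x))"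
      by (simp add: lin_neg[OF lp] lin_scale[OF lp])
  next
    fix a b c d x y z t
    assume "a \<in> {0,1::nat}" "b \<in> {0,1::nat}" "c \<in> {0,1::nat}" "d \<in> {0,1::nat}"
      "x \<in> V a" "y \<in> V b" "z \<in> V c" "t \<in> V d"
    then have E: "scale 2 (br (al (al t)) (hom_jac scale br al b c x y z)) =
            hom_jac scale br al a (b + c) (al t) (al x) (br y z)
          + scale ((-1) ^ (a * (b + c))) (hom_jac scale br al b (c + a) (al t) (al y) (br z x))
          + scale ((-1) ^ (c * (a + b))) (hom_jac scale br al c (a + b) (al t) (al z) (br x y))"
      using mal by blast
    have E2: "(al ^^ (m+m+m)) (scale 2 (br (al (al t)) (hom_jac scale br al b c x y z))) =
            (al ^^ (m+m+m)) (hom_jac scale br al a (b + c) (al t) (al x) (br y z)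
          + scale ((-1) ^ (a * (b + c))) (hom_jac scale br al b (c + a) (al t) (al y) (br z x))
          + scale ((-1) ^ (c * (a + b))) (hom_jac scale br al c (a + b) (al t) (al z) (br x y)))"
      using E by (rule arg_cong)
    show "scale 2 ((al ^^ m) (br ((al ^^ Suc m) ((al ^^ Suc m) t))
              (hom_jac scale (\<lambda>x y. (al ^^ m) (br x y)) (al ^^ Suc m) b c x y z))) =
          hom_jac scale (\<lambda>x y. (al ^^ m) (br x y)) (al ^^ Suc m) a (b + c) ((al ^^ Suc m) t) ((al ^^ Suc m) x) ((al ^^ m) (br y z)) +
          scale ((- 1) ^ (a * (b + c))) (hom_jac scale (\<lambda>x y. (al ^^ m) (br x y)) (al ^^ Suc m) b (c + a) ((al ^^ Suc m) t) ((al ^^ Suc m) y) ((al ^^ m) (br z x))) +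
          scale ((- 1) ^ (c * (a + b))) (hom_jac scale (\<lambda>x y. (al ^^ m) (br x y)) (al ^^ Suc m) c (a + b) ((al ^^ Suc m) t) ((al ^^ Suc m) z) ((al ^^ m) (br x y)))"
      using E2
      apply (simp only: jac_pow[OF lin mul] jac_comm[OF lin mul] lin_add[OF lp] lin_scale[OF lp])
      apply (simp only: mult_pow[OF mul] pow_pow pow_one pow_one')
      apply (simp only: add_Suc_right add_Suc add.assoc)
      apply (simp only: jac_comm[OF lin mul])
      apply (simp only: pow_pow add_Suc_right add_Suc add.assoc)
      done
  qed
qed

theorem mainTheorem10:
  fixes scale :: "'k::field_char_0 \<Rightarrow> 'v::ab_group_add \<Rightarrow> 'v"
    and V :: "nat \<Rightarrow> 'v set"
    and br :: "'v \<Rightarrow> 'v \<Rightarrow> 'v"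
    and al :: "'v \<Rightarrow> 'v"
  assumes "alg_closed_field TYPE('k)"
    and "hom_malcev_superalgebra scale V br al"
    and "multiplicative br al"
  shows "\<forall>n::nat. hom_malcev_superalgebra scale V
           (\<lambda>x y. (al ^^ (2 ^ n - 1)) (br x y)) (al ^^ (2 ^ n))"
proof
  fix n :: nat
  obtain k where k: "(2::nat) ^ n = Suc k" using not0_implies_Suc[of "(2::nat)^n"] by auto
  then have hk: "(2::nat) ^ n - 1 = k" by simp
  show "hom_malcev_superalgebra scale V
           (\<lambda>x y. (al ^^ (2 ^ n - 1)) (br x y)) (al ^^ (2 ^ n))"
    unfolding hk unfolding k by (rule derived[OF assms(2)])
qed

end
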